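(* Let $N\in\mathbb{C}^{m\times n}$ have rank $r$ and singular value decomposition $N=U\begin{pmatrix}\Sigma & 0\\ 0 & 0\end{pmatrix}V^{\ast}$, where $\Sigma\in\mathbb{C}^{r\times r}$ is diagonal with positive diagonal entries and $U\in\mathbb{C}^{m\times m}$, $V\in\mathbb{C}^{n\times n}$ are unitary. Let $X\in\mathbb{C}^{m\times m}$ and $Y\in\mathbb{C}^{n\times n}$ be nonsingular, and let $M_{1}=XN$, $M_{2}=NY$. (1) If $X=U\begin{pmatrix}X_{1} & 0\\ X_{2} & X_{4}\end{pmatrix}U^{\ast}$ for some $X_{1}\in\mathbb{C}^{r\times r}$, $X_{2}\in\mathbb{C}^{(m-r)\times r}$, $X_{4}\in\mathbb{C}^{(m-r)\times(m-r)}$, then $$M_{1}^{\dagger}=N^{\dagger}X^{-1}NN^{\dagger}(I+R^{\ast}R)^{-1}(I+R^{\ast}),$$ where $R=XE_{N}X^{-1}(E_{N}-I)$. (2) If $Y=V\begin{pmatrix}Y_{1} & Y_{3}\\ 0 & Y_{4}\end{pmatrix}V^{\ast}$ for some $Y_{1}\in\mathbb{C}^{r\times r}$, $Y_{3}\in\mathbb{C}^{r\times(n-r)}$, $Y_{4}\in\mathbb{C}^{(n-r)\times(n-r)}$, then $$M_{2}^{\dagger}=(I+L^{\ast})(I+LL^{\ast})^{-1}N^{\dagger}NY^{-1}N^{\dagger},$$ where $L=(F_{N}-I)Y^{-1}F_{N}Y$.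
   Context: For a complex matrix $A$, $A^{\ast}$ is its conjugate transpose and $A^{\dagger}$ its Moore--Penrose inverse. $E_{A}:=I-AA^{\dagger}$ and $F_{A}:=I-A^{\dagger}A$. $I$ denotes an identity matrix of the appropriate size. *)

theory Defs
  imports "Jordan_Normal_Form.Schur_Decomposition" "Jordan_Normal_Form.DL_Rank"
begin

definition unitary_mat :: "complex mat \<Rightarrow> nat \<Rightarrow> bool" where
  "unitary_mat U k \<longleftrightarrow> U \<in> carrier_mat k k \<and> U * mat_adjoint U = 1\<^sub>m k \<and> mat_adjoint U * U = 1\<^sub>m k"

definition minv :: "complex mat \<Rightarrow> complex mat" where
  "minv A = (THE B. B \<in> carrier_mat (dim_row A) (dim_row A) \<and>
                    A * B = 1\<^sub>m (dim_row A) \<and> B * A = 1\<^sub>m (dim_row A))"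

definition mp_pinv :: "complex mat \<Rightarrow> complex mat" where
  "mp_pinv A = (THE B. B \<in> carrier_mat (dim_col A) (dim_row A) \<and>
                  A * B * A = A \<and> B * A * B = B \<and>
                  mat_adjoint (A * B) = A * B \<and> mat_adjoint (B * A) = B * A)"

definition E_proj :: "complex mat \<Rightarrow> complex mat" where
  "E_proj A = 1\<^sub>m (dim_row A) - A * mp_pinv A"

definition F_proj :: "complex mat \<Rightarrow> complex mat" where
  "F_proj A = 1\<^sub>m (dim_col A) - mp_pinv A * A"

definition mat_rank :: "complex mat \<Rightarrow> nat" where
  "mat_rank A = vec_space.rank (dim_row A) A"

end

theory Submission
  imports Defs
begin


lemma adj_dims[simp]: "dim_row (mat_adjoint A) = dim_col A" "dim_col (mat_adjoint A) = dim_row A"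
  unfolding mat_adjoint_def by (auto simp: mat_of_rows_def)

lemma adj_index[simp]: "i < dim_col A \<Longrightarrow> j < dim_row A \<Longrightarrow> mat_adjoint A $$ (i,j) = cnj (A $$ (j,i))"
  unfolding mat_adjoint_def by (auto simp: mat_of_rows_def)

lemma adj_carrier[simp]: "A \<in> carrier_mat m n \<Longrightarrow> mat_adjoint A \<in> carrier_mat n m"
  unfolding carrier_mat_def by simp

lemma adj_adj[simp]: "mat_adjoint (mat_adjoint (A::complex mat)) = A"
  by (rule eq_matI, auto)

lemma adj_mult: fixes A B :: "complex mat"
  assumes "dim_col A = dim_row B"
  shows "mat_adjoint (A * B) = mat_adjoint B * mat_adjoint A"
  using assms by (intro eq_matI, auto simp: scalar_prod_def cnj_sum mult.commute)

lemma adj_add: fixes A B :: "complex mat"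
  assumes "dim_row A = dim_row B" "dim_col A = dim_col B"
  shows "mat_adjoint (A + B) = mat_adjoint A + mat_adjoint B"
  using assms by (intro eq_matI, auto)

lemma adj_minus: fixes A B :: "complex mat"
  assumes "dim_row A = dim_row B" "dim_col A = dim_col B"
  shows "mat_adjoint (A - B) = mat_adjoint A - mat_adjoint B"
  using assms by (intro eq_matI, auto)

lemma adj_uminus: fixes A :: "complex mat"
  shows "mat_adjoint (- A) = - mat_adjoint A"
  by (intro eq_matI, auto)

lemma adj_one[simp]: "mat_adjoint (1\<^sub>m n :: complex mat) = 1\<^sub>m n"
  by (intro eq_matI, auto)

lemma adj_zero[simp]: "mat_adjoint (0\<^sub>m n k :: complex mat) = 0\<^sub>m k n"
  by (intro eq_matI, auto)

lemma adj_four_block: fixes A B C D :: "complex mat"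
  assumes "A \<in> carrier_mat n1 k1" "B \<in> carrier_mat n1 k2" "C \<in> carrier_mat n2 k1" "D \<in> carrier_mat n2 k2"
  shows "mat_adjoint (four_block_mat A B C D) = four_block_mat (mat_adjoint A) (mat_adjoint C) (mat_adjoint B) (mat_adjoint D)"
  using assms by (intro eq_matI, auto)

lemma assoc': "dim_col A = dim_row B \<Longrightarrow> dim_col B = dim_row C \<Longrightarrow> (A::complex mat) * B * C = A * (B * C)"
  by (rule assoc_mult_mat[of A "dim_row A" "dim_col A" B "dim_col B" C "dim_col C"], unfold carrier_mat_def, auto)

lemma distl': fixes A B C :: "complex mat"
  shows "dim_col A = dim_row B \<Longrightarrow> dim_row B = dim_row C \<Longrightarrow> dim_col B = dim_col C \<Longrightarrow> A * (B + C) = A * B + A * C"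
  by (rule mult_add_distrib_mat[of A "dim_row A" "dim_col A" B "dim_col B" C], unfold carrier_mat_def, auto)

lemma distr': fixes A B C :: "complex mat"
  shows "dim_row A = dim_row B \<Longrightarrow> dim_col A = dim_col B \<Longrightarrow> dim_col B = dim_row C \<Longrightarrow> (A + B) * C = A * C + B * C"
  by (rule add_mult_distrib_mat[of A "dim_row A" "dim_col A" B C "dim_col C"], unfold carrier_mat_def, auto)

lemma distlm': fixes A B C :: "complex mat"
  shows "dim_col A = dim_row B \<Longrightarrow> dim_row B = dim_row C \<Longrightarrow> dim_col B = dim_col C \<Longrightarrow> A * (B - C) = A * B - A * C"
  by (rule mult_minus_distrib_mat[of A "dim_row A" "dim_col A" B "dim_col B" C], unfold carrier_mat_def, auto)

lemma distrm': fixes A B C :: "complex mat"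
  shows "dim_row A = dim_row B \<Longrightarrow> dim_col A = dim_col B \<Longrightarrow> dim_col B = dim_row C \<Longrightarrow> (A - B) * C = A * C - B * C"
  by (rule minus_mult_distrib_mat[of A "dim_row A" "dim_col A" B C "dim_col C"], unfold carrier_mat_def, auto)

lemma zl': "dim_row (A::complex mat) = n \<Longrightarrow> dim_col A = k \<Longrightarrow> 0\<^sub>m n k + A = A"
  by (intro eq_matI, auto)
lemma zr': "dim_row (A::complex mat) = n \<Longrightarrow> dim_col A = k \<Longrightarrow> A + 0\<^sub>m n k = A"
  by (intro eq_matI, auto)



definition penrose :: "complex mat \<Rightarrow> complex mat \<Rightarrow> bool" where
  "penrose A B \<longleftrightarrow> B \<in> carrier_mat (dim_col A) (dim_row A) \<and>
                  A * B * A = A \<and> B * A * B = B \<and>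
                  mat_adjoint (A * B) = A * B \<and> mat_adjoint (B * A) = B * A"

lemma penrose_unique:
  assumes A: "A \<in> carrier_mat m n" and pB: "penrose A B" and pC: "penrose A C"
  shows "B = C"
proof -
  from pB have B: "B \<in> carrier_mat n m" and B1: "A * B * A = A" and B2: "B * A * B = B"
    and B3: "mat_adjoint (A * B) = A * B" and B4: "mat_adjoint (B * A) = B * A"
    using A by (auto simp: penrose_def)
  from pC have C: "C \<in> carrier_mat n m" and C1: "A * C * A = A" and C2: "C * A * C = C"
    and C3: "mat_adjoint (A * C) = A * C" and C4: "mat_adjoint (C * A) = C * A"
    using A by (auto simp: penrose_def)
  note d = carrier_matD[OF A] carrier_matD[OF B] carrier_matD[OF C]
  have Aadj: "mat_adjoint A = mat_adjoint A * (A * C)"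
  proof -
    have "mat_adjoint (A * C * A) = mat_adjoint A * mat_adjoint (A * C)" by (rule adj_mult, simp add: d)
    thus ?thesis using C3 C1 by simp
  qed
  have Aadj2: "mat_adjoint A = (B * A) * mat_adjoint A"
  proof -
    have "mat_adjoint (A * (B * A)) = mat_adjoint (B * A) * mat_adjoint A" by (rule adj_mult, simp add: d)
    thus ?thesis using B4 B1 by (simp add: assoc' d)
  qed
  have "B = B * (A * B)" using B2 by (simp add: assoc' d)
  also have "\<dots> = B * mat_adjoint (A * B)" using B3 by simp
  also have "\<dots> = B * (mat_adjoint B * mat_adjoint A)" by (subst adj_mult, auto simp: d)
  also have "\<dots> = B * (mat_adjoint B * (mat_adjoint A * (A * C)))" using Aadj by simp
  also have "\<dots> = B * (mat_adjoint B * mat_adjoint A) * (A * C)" by (simp add: assoc' d)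
  also have "\<dots> = B * (A * B) * (A * C)" using B3 by (subst adj_mult[symmetric], auto simp: d)
  also have "\<dots> = B * A * C" using B2 by (simp add: assoc' d)
  finally have eB: "B = B * A * C" .
  have "C = (C * A) * C" using C2 by simp
  also have "\<dots> = mat_adjoint (C * A) * C" using C4 by simp
  also have "\<dots> = (mat_adjoint A * mat_adjoint C) * C" by (subst adj_mult, auto simp: d)
  also have "\<dots> = ((B * A) * mat_adjoint A * mat_adjoint C) * C" using Aadj2 by simp
  also have "\<dots> = (B * A) * (mat_adjoint A * mat_adjoint C) * C" by (simp add: assoc' d)
  also have "\<dots> = (B * A) * (C * A) * C" using C4 by (subst adj_mult[symmetric], auto simp: d)
  also have "\<dots> = B * A * C" using C2 by (simp add: assoc' d)
  finally show ?thesis using eB by simp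
qed

lemma mp_pinv_eq: assumes A: "A \<in> carrier_mat m n" and p: "penrose A B"
  shows "mp_pinv A = B"
  unfolding mp_pinv_def
proof (rule the_equality)
  show "B \<in> carrier_mat (dim_col A) (dim_row A) \<and> A * B * A = A \<and> B * A * B = B \<and>
    mat_adjoint (A * B) = A * B \<and> mat_adjoint (B * A) = B * A" using p by (simp add: penrose_def)
  fix C assume "C \<in> carrier_mat (dim_col A) (dim_row A) \<and> A * C * A = A \<and> C * A * C = C \<and>
    mat_adjoint (A * C) = A * C \<and> mat_adjoint (C * A) = C * A"
  hence "penrose A C" by (simp add: penrose_def)
  thus "C = B" using penrose_unique[OF A p] by simp
qed

lemma penrose_adj: assumes A: "A \<in> carrier_mat m n" and p: "penrose A B"
  shows "penrose (mat_adjoint A) (mat_adjoint B)"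
proof -
  from p have B: "B \<in> carrier_mat n m" and B1: "A * B * A = A" and B2: "B * A * B = B"
    and B3: "mat_adjoint (A * B) = A * B" and B4: "mat_adjoint (B * A) = B * A"
    using A by (auto simp: penrose_def)
  note d = carrier_matD[OF A] carrier_matD[OF B]
  have e1: "mat_adjoint A * mat_adjoint B = B * A" using B4 by (subst adj_mult[symmetric], auto simp: d)
  have e2: "mat_adjoint B * mat_adjoint A = A * B" using B3 by (subst adj_mult[symmetric], auto simp: d)
  have "mat_adjoint A * mat_adjoint B * mat_adjoint A = mat_adjoint (A * B * A)"
    by (simp add: adj_mult assoc' d)
  moreover have "mat_adjoint B * mat_adjoint A * mat_adjoint B = mat_adjoint (B * A * B)"
    by (simp add: adj_mult assoc' d)
  ultimately show ?thesis using B1 B2 B3 B4 e1 e2 B A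
    unfolding penrose_def by (simp add: d)
qed

lemma penrose_unitary:
  assumes D: "D \<in> carrier_mat m n" and p: "penrose D D'"
    and U: "unitary_mat U m" and V: "unitary_mat V n"
  shows "penrose (U * D * mat_adjoint V) (V * D' * mat_adjoint U)"
proof -
  from p have D': "D' \<in> carrier_mat n m" and B1: "D * D' * D = D" and B2: "D' * D * D' = D'"
    and B3: "mat_adjoint (D * D') = D * D'" and B4: "mat_adjoint (D' * D) = D' * D"
    using D by (auto simp: penrose_def)
  from U have Uc: "U \<in> carrier_mat m m" and U1: "mat_adjoint U * U = 1\<^sub>m m" and U2: "U * mat_adjoint U = 1\<^sub>m m"
    by (auto simp: unitary_mat_def)
  from V have Vc: "V \<in> carrier_mat n n" and V1: "mat_adjoint V * V = 1\<^sub>m n" and V2: "V * mat_adjoint V = 1\<^sub>m n"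
    by (auto simp: unitary_mat_def)
  note d = carrier_matD[OF D] carrier_matD[OF D'] carrier_matD[OF Uc] carrier_matD[OF Vc]
  have U1': "mat_adjoint U * (U * T) = T" if "dim_row T = m" for T
    using that by (simp add: assoc'[symmetric] d U1)
  have V1': "mat_adjoint V * (V * T) = T" if "dim_row T = n" for T
    using that by (simp add: assoc'[symmetric] d V1)
  have AB: "U * D * mat_adjoint V * (V * D' * mat_adjoint U) = U * (D * D') * mat_adjoint U"
    by (simp add: assoc' d V1')
  have BA: "V * D' * mat_adjoint U * (U * D * mat_adjoint V) = V * (D' * D) * mat_adjoint V"
    by (simp add: assoc' d U1')
  show ?thesis unfolding penrose_def
  proof (intro conjI)
    show "V * D' * mat_adjoint U \<in> carrier_mat (dim_col (U * D * mat_adjoint V)) (dim_row (U * D * mat_adjoint V))"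
      by (rule carrier_matI, simp_all add: d)
    have B1': "D * (D' * (D * T)) = D * T" if "dim_row T = n" for T
      using B1 that d by (simp add: assoc'[symmetric])
    have B2': "D' * (D * (D' * T)) = D' * T" if "dim_row T = m" for T
      using B2 that d by (simp add: assoc'[symmetric])
    show "U * D * mat_adjoint V * (V * D' * mat_adjoint U) * (U * D * mat_adjoint V) = U * D * mat_adjoint V"
      unfolding AB by (simp add: assoc' d U1' B1')
    show "V * D' * mat_adjoint U * (U * D * mat_adjoint V) * (V * D' * mat_adjoint U) = V * D' * mat_adjoint U"
      unfolding BA by (simp add: assoc' d V1' B2')
    have "mat_adjoint (U * (D * D') * mat_adjoint U) = U * mat_adjoint (D * D') * mat_adjoint U"
      by (simp add: adj_mult d assoc')
    thus "mat_adjoint (U * D * mat_adjoint V * (V * D' * mat_adjoint U)) = U * D * mat_adjoint V * (V * D' * mat_adjoint U)"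
      unfolding AB using B3 by simp
    have "mat_adjoint (V * (D' * D) * mat_adjoint V) = V * mat_adjoint (D' * D) * mat_adjoint V"
      by (simp add: adj_mult d assoc')
    thus "mat_adjoint (V * D' * mat_adjoint U * (U * D * mat_adjoint V)) = V * D' * mat_adjoint U * (U * D * mat_adjoint V)"
      unfolding BA using B4 by simp
  qed
qed

lemma minv_eq: assumes A: "A \<in> carrier_mat n n" and B: "B \<in> carrier_mat n n" and AB: "A * B = 1\<^sub>m n"
  shows "minv A = B"
proof -
  have BA: "B * A = 1\<^sub>m n" using mat_mult_left_right_inverse[OF A B AB] .
  show ?thesis unfolding minv_def
  proof (rule the_equality)
    show "B \<in> carrier_mat (dim_row A) (dim_row A) \<and> A * B = 1\<^sub>m (dim_row A) \<and> B * A = 1\<^sub>m (dim_row A)"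
      using A B AB BA by auto
    fix C assume "C \<in> carrier_mat (dim_row A) (dim_row A) \<and> A * C = 1\<^sub>m (dim_row A) \<and> C * A = 1\<^sub>m (dim_row A)"
    hence C: "C \<in> carrier_mat n n" and CA: "C * A = 1\<^sub>m n" using A by auto
    have "C = C * (A * B)" using AB C by simp
    also have "\<dots> = (C * A) * B" using A B C by simp
    finally show "C = B" using CA B by simp
  qed
qed

lemma invertible_minv: assumes A: "A \<in> carrier_mat n n" and i: "invertible_mat A"
  shows "minv A \<in> carrier_mat n n \<and> A * minv A = 1\<^sub>m n \<and> minv A * A = 1\<^sub>m n"
proof -
  from i obtain B where "inverts_mat A B" "inverts_mat B A" unfolding invertible_mat_def by auto
  hence AB: "A * B = 1\<^sub>m n" and BA: "B * A = 1\<^sub>m (dim_row B)" using A unfolding inverts_mat_def by auto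
  have "dim_col B = n" using AB by (metis index_mult_mat(3) index_one_mat(3))
  moreover have "dim_row B = n" using BA A by (metis index_mult_mat(3) index_one_mat(3) carrier_matD(2))
  ultimately have B: "B \<in> carrier_mat n n" by auto
  have "minv A = B" by (rule minv_eq[OF A B AB])
  thus ?thesis using AB B mat_mult_left_right_inverse[OF A B AB] by simp
qed



lemma adj_mult_self_diag:
  fixes M :: "complex mat" assumes j: "j < dim_col M"
  shows "(mat_adjoint M * M) $$ (j,j) = of_real (\<Sum>k<dim_row M. (cmod (M $$ (k,j)))\<^sup>2)"
proof -
  have "(mat_adjoint M * M) $$ (j,j) = (\<Sum>k<dim_row M. cnj (M $$ (k,j)) * M $$ (k,j))"
    using j by (simp add: scalar_prod_def lessThan_atLeast0)
  also have "\<dots> = (\<Sum>k<dim_row M. of_real ((cmod (M $$ (k,j)))\<^sup>2))"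
    by (rule sum.cong, simp, subst complex_norm_square, rule mult.commute)
  finally show ?thesis by simp
qed

lemma Z_invertible:
  fixes R :: "complex mat" assumes R: "R \<in> carrier_mat k m"
  shows "\<exists>Zi. Zi \<in> carrier_mat m m \<and> (1\<^sub>m m + mat_adjoint R * R) * Zi = 1\<^sub>m m \<and> Zi * (1\<^sub>m m + mat_adjoint R * R) = 1\<^sub>m m"
proof -
  let ?Z = "1\<^sub>m m + mat_adjoint R * R"
  have Zc: "?Z \<in> carrier_mat m m" using R by auto
  have "det ?Z \<noteq> 0"
  proof
    assume "det ?Z = 0"
    then obtain v where v: "v \<in> carrier_vec m" "v \<noteq> 0\<^sub>v m" "?Z *\<^sub>v v = 0\<^sub>v m"
      using det_0_iff_vec_prod_zero[OF Zc] by auto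
    define W where "W = mat m 1 (\<lambda>(i,j). v $ i)"
    have W: "W \<in> carrier_mat m 1" by (simp add: W_def)
    have ZW: "?Z * W = 0\<^sub>m m 1"
    proof (rule eq_matI)
      fix i j assume ij: "i < dim_row (0\<^sub>m m 1 :: complex mat)" "j < dim_col (0\<^sub>m m 1 :: complex mat)"
      have "col W j = v" using ij v by (auto simp: W_def)
      have "(?Z * W) $$ (i,j) = row ?Z i \<bullet> col W j" using ij Zc W by (intro index_mult_mat(1)) auto
      also have "\<dots> = (?Z *\<^sub>v v) $ i" using ij carrier_matD[OF Zc] \<open>col W j = v\<close> by simp
      finally have "(?Z * W) $$ (i,j) = (?Z *\<^sub>v v) $ i" .
      thus "(?Z * W) $$ (i,j) = 0\<^sub>m m 1 $$ (i,j)" using v ij by simp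
    qed (use W Zc in auto)
    have "mat_adjoint W * (?Z * W) = mat_adjoint W * W + mat_adjoint (R * W) * (R * W)"
      using R W by (simp add: distl' distr' adj_mult assoc' carrier_matD)
    hence eq: "mat_adjoint W * W + mat_adjoint (R * W) * (R * W) = 0\<^sub>m 1 1"
      using ZW W by simp
    have RW: "R * W \<in> carrier_mat k 1" using R W by simp
    have "(mat_adjoint W * W + mat_adjoint (R * W) * (R * W)) $$ (0,0) = 0" using eq by simp
    hence s0: "(mat_adjoint W * W) $$ (0,0) + (mat_adjoint (R * W) * (R * W)) $$ (0,0) = 0"
      using RW by (subst (asm) index_add_mat(1), auto)
    have "0 < dim_col W" using W by simp
    from adj_mult_self_diag[OF this] have e1: "(mat_adjoint W * W) $$ (0,0) = of_real (\<Sum>i<m. (cmod (W $$ (i,0)))\<^sup>2)"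
      by (simp only: carrier_matD[OF W])
    have "0 < dim_col (R * W)" using W by simp
    from adj_mult_self_diag[OF this] have e2: "(mat_adjoint (R * W) * (R * W)) $$ (0,0) = of_real (\<Sum>i<k. (cmod ((R*W) $$ (i,0)))\<^sup>2)"
      by (simp only: carrier_matD[OF RW])
    from s0 have "of_real (\<Sum>i<m. (cmod (W $$ (i,0)))\<^sup>2) + of_real (\<Sum>i<k. (cmod ((R*W) $$ (i,0)))\<^sup>2) = (0::complex)"
      unfolding e1 e2 .
    hence "(\<Sum>i<m. (cmod (W $$ (i,0)))\<^sup>2) + (\<Sum>i<k. (cmod ((R*W) $$ (i,0)))\<^sup>2) = 0"
      by (metis of_real_add of_real_eq_0_iff)
    moreover have "(\<Sum>i<m. (cmod (W $$ (i,0)))\<^sup>2) \<ge> 0" "(\<Sum>i<k. (cmod ((R*W) $$ (i,0)))\<^sup>2) \<ge> 0"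
      by (auto intro: sum_nonneg)
    ultimately have "(\<Sum>i<m. (cmod (W $$ (i,0)))\<^sup>2) = 0" by linarith
    hence "\<forall>i\<in>{..<m}. (cmod (W $$ (i,0)))\<^sup>2 = 0" by (subst (asm) sum_nonneg_eq_0_iff, auto)
    hence "v = 0\<^sub>v m" using v(1) by (intro eq_vecI, auto simp: W_def)
    thus False using v(2) by simp
  qed
  from det_non_zero_imp_unit[OF Zc this, of "()"]
  obtain B where "B \<in> carrier_mat m m" "B * ?Z = 1\<^sub>m m" "?Z * B = 1\<^sub>m m"
    unfolding Units_def ring_mat_def by auto
  thus ?thesis by blast
qed



lemma core1:
  fixes N Nd X Xi :: "complex mat"
  assumes N: "N \<in> carrier_mat m n" and pN: "penrose N Nd"
    and X: "X \<in> carrier_mat m m" and Xi: "Xi \<in> carrier_mat m m"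
    and XXi: "X * Xi = 1\<^sub>m m" and XiX: "Xi * X = 1\<^sub>m m"
    and tri1: "N * Nd * X * (N * Nd) = N * Nd * X"
    and tri2: "N * Nd * Xi * (N * Nd) = N * Nd * Xi"
  shows "penrose (X * N) (Nd * Xi * N * Nd *
     minv (1\<^sub>m m + mat_adjoint (X * (1\<^sub>m m - N * Nd) * Xi * ((1\<^sub>m m - N * Nd) - 1\<^sub>m m)) *
                       (X * (1\<^sub>m m - N * Nd) * Xi * ((1\<^sub>m m - N * Nd) - 1\<^sub>m m))) *
     (1\<^sub>m m + mat_adjoint (X * (1\<^sub>m m - N * Nd) * Xi * ((1\<^sub>m m - N * Nd) - 1\<^sub>m m))))"
proof -
  from pN have Nd: "Nd \<in> carrier_mat n m" and N1: "N * Nd * N = N" and N2: "Nd * N * Nd = Nd"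
    and N3: "mat_adjoint (N * Nd) = N * Nd" and N4: "mat_adjoint (Nd * N) = Nd * N"
    using N by (auto simp: penrose_def)
  define P where "P = N * Nd"
  define R where "R = X * (1\<^sub>m m - P) * Xi * ((1\<^sub>m m - P) - 1\<^sub>m m)"
  define C where "C = X * (P * (Xi * P))"
  have Pc: "P \<in> carrier_mat m m" using N Nd by (simp add: P_def)
  have Rc: "R \<in> carrier_mat m m" using carrier_matD[OF X] carrier_matD[OF Xi] carrier_matD[OF Pc]
    unfolding R_def by (intro carrier_matI) simp_all
  have Cc: "C \<in> carrier_mat m m" using carrier_matD[OF X] carrier_matD[OF Xi] carrier_matD[OF Pc]
    unfolding C_def by (intro carrier_matI) simp_all
  note d = carrier_matD[OF N] carrier_matD[OF Nd] carrier_matD[OF X] carrier_matD[OF Xi]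
     carrier_matD[OF Pc] carrier_matD[OF Rc] carrier_matD[OF Cc]
  have T: "A * (B * T) = D * T" if "A * B = D" "dim_col A = dim_row B" "dim_col B = dim_row T" for A B D T :: "complex mat"
    using that assoc'[of A B T] by simp
  have PN: "P * N = N" using N1 by (simp add: P_def)
  have NdP: "Nd * P = Nd" using N2 d by (simp add: P_def assoc')
  have PP: "P * P = P" unfolding P_def using N1 d by (simp add: assoc'[symmetric])
  have Padj: "mat_adjoint P = P" using N3 by (simp add: P_def)
  have PNT: "P * (N * T) = N * T" if "dim_row T = n" for T using T[OF PN] that d by simp
  have PPT: "P * (P * T) = P * T" if "dim_row T = m" for T using T[OF PP] that d by simp
  have XXiT: "X * (Xi * T) = T" if "dim_row T = m" for T using T[OF XXi] that d by simp
  have XiXT: "Xi * (X * T) = T" if "dim_row T = m" for T using T[OF XiX] that d by simp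
  have t1: "P * (X * P) = P * X" using tri1 d by (simp add: P_def assoc')
  have t2: "P * (Xi * P) = P * Xi" using tri2 d by (simp add: P_def assoc')
  have t1T: "P * (X * (P * T)) = P * (X * T)" if "dim_row T = m" for T
    using that d tri1 by (simp add: assoc'[symmetric] P_def)
  have t2T: "P * (Xi * (P * T)) = P * (Xi * T)" if "dim_row T = m" for T
    using that d tri2 by (simp add: assoc'[symmetric] P_def)
  have Em1: "(1\<^sub>m m - P) - 1\<^sub>m m = - P" using Pc by (intro eq_matI, auto)
  have RC: "R = C - P"
  proof -
    have "R = - (X * (1\<^sub>m m - P) * Xi * P)" unfolding R_def Em1 using X Xi Pc by simp
    also have "X * (1\<^sub>m m - P) = X - X * P" using d by (simp add: distlm')
    also have "(X - X * P) * Xi = 1\<^sub>m m - X * P * Xi" using d XXi by (simp add: distrm')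
    also have "(1\<^sub>m m - X * P * Xi) * P = P - C" using d
      by (simp add: distrm' C_def assoc')
    also have "- (P - C) = C - P" using Pc Cc by (intro eq_matI, auto)
    finally show ?thesis .
  qed
  have PC: "P * C = P" unfolding C_def using d by (simp add: t1T XXiT PP)
  have CP: "C * P = C" unfolding C_def using d by (simp add: assoc' PP)
  have RP: "R * P = R" unfolding RC using Cc Pc by (simp add: minus_mult_distrib_mat[of _ m m] CP PP)
  have PR: "P * R = 0\<^sub>m m m" unfolding RC using Cc Pc by (simp add: mult_minus_distrib_mat[of _ m m] PC PP)
  have Radj: "mat_adjoint R = mat_adjoint C - P" unfolding RC using Cc Pc by (simp add: adj_minus Padj)
  have RadjP: "mat_adjoint R * P = 0\<^sub>m m m"
  proof -
    have "mat_adjoint (P * R) = mat_adjoint R * P" using d by (simp add: adj_mult Padj)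
    thus ?thesis using PR by simp
  qed
  have PRadj: "P * mat_adjoint R = mat_adjoint R"
  proof -
    have "mat_adjoint (R * P) = P * mat_adjoint R" using d by (simp add: adj_mult Padj)
    thus ?thesis using RP by simp
  qed
  have CPR: "C = P + R" unfolding RC using Cc Pc by (intro eq_matI, auto)
  have Cadj: "mat_adjoint C = P + mat_adjoint R" unfolding CPR using Rc Pc by (simp add: adj_add Padj)
  define Z where "Z = 1\<^sub>m m + mat_adjoint R * R"
  have Zc: "Z \<in> carrier_mat m m" using carrier_matD[OF Rc] unfolding Z_def by (intro carrier_matI) simp_all
  obtain Zi where Zi: "Zi \<in> carrier_mat m m" and ZZi: "Z * Zi = 1\<^sub>m m" and ZiZ: "Zi * Z = 1\<^sub>m m"
    using Z_invertible[OF Rc] unfolding Z_def by auto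
  have minvZ: "minv Z = Zi" by (rule minv_eq[OF Zc Zi ZZi])
  note d = d carrier_matD[OF Zc] carrier_matD[OF Zi]
  define K where "K = P + mat_adjoint R * R"
  have Kc: "K \<in> carrier_mat m m" using carrier_matD[OF Rc] carrier_matD[OF Pc] unfolding K_def by (intro carrier_matI) simp_all
  have ZP: "Z * P = K" unfolding Z_def K_def using d
    by (simp add: distr' assoc' RP)
  have PZ: "P * Z = K" unfolding Z_def K_def using d
    by (simp add: distl' assoc'[symmetric] PRadj)
  have CC: "mat_adjoint C * C = K" unfolding Cadj unfolding CPR K_def using d Pc Rc
    by (simp add: distl' distr' PP PR RadjP zl' zr')
  have Zadj: "mat_adjoint Z = Z" unfolding Z_def using Rc by (simp add: adj_add adj_mult)
  have PZi: "P * Zi = Zi * P"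
  proof -
    have ZiZT: "Zi * (Z * T) = T" if "dim_row T = m" for T using T[OF ZiZ] that d by simp
    have "P * Zi = Zi * (Z * (P * Zi))" using d by (simp add: ZiZT)
    also have "\<dots> = Zi * ((Z * P) * Zi)" using d by (simp add: assoc')
    also have "\<dots> = Zi * ((P * Z) * Zi)" using ZP PZ by simp
    also have "\<dots> = Zi * P" using d by (simp add: assoc' ZZi)
    finally show ?thesis .
  qed
  have PZiT: "P * (Zi * T) = Zi * (P * T)" if "dim_row T = m" for T
    using that d by (simp add: assoc'[symmetric] PZi)
  have Ziadj: "mat_adjoint Zi = Zi"
  proof -
    have "mat_adjoint (Z * Zi) = mat_adjoint Zi * Z" using d by (simp add: adj_mult Zadj)
    hence a: "mat_adjoint Zi * Z = 1\<^sub>m m" using ZZi by simp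
    have "mat_adjoint Zi = mat_adjoint Zi * (Z * Zi)" using ZZi d by simp
    also have "\<dots> = (mat_adjoint Zi * Z) * Zi" using d by (simp add: assoc')
    finally show ?thesis using a d by simp
  qed
  define Cs where "Cs = mat_adjoint C"
  have Csc: "Cs \<in> carrier_mat m m" using Cc unfolding Cs_def by (rule adj_carrier)
  note d = d carrier_matD[OF Csc] carrier_matD[OF Kc]
  have PCs: "P * Cs = Cs"
  proof -
    have "mat_adjoint (C * P) = P * Cs" using d by (simp add: adj_mult Padj Cs_def)
    thus ?thesis using CP by (simp add: Cs_def)
  qed
  have CPT: "C * (P * T) = C * T" if "dim_row T = m" for T using T[OF CP] that d by simp
  have CCT: "Cs * (C * T) = K * T" if "dim_row T = m" for T using T[OF CC[folded Cs_def]] that d by simp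
  have NNdT: "N * (Nd * T) = P * T" if "dim_row T = m" for T using that d by (simp add: P_def assoc')
  have NdPT: "Nd * (P * T) = Nd * T" if "dim_row T = m" for T using T[OF NdP] that d by simp
  have N2T: "Nd * (N * (Nd * T)) = Nd * T" if "dim_row T = m" for T using that d N2 by (simp add: assoc'[symmetric])
  have ZiKT: "Zi * (K * T) = P * T" if "dim_row T = m" for T
  proof -
    have "Zi * (K * T) = Zi * (Z * (P * T))" using that d by (simp add: ZP[symmetric] assoc')
    also have "\<dots> = P * T" using that d by (simp add: assoc'[symmetric] ZiZ)
    finally show ?thesis .
  qed
  have ZiCsT: "Zi * (Cs * T) = P * (Zi * (Cs * T))" if "dim_row T = m" for T
  proof -
    have "Zi * (Cs * T) = Zi * (P * (Cs * T))" using that d by (simp add: assoc'[symmetric] PCs)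
    also have "\<dots> = P * (Zi * (Cs * T))" using that d by (simp add: PZiT)
    finally show ?thesis .
  qed
  have CXN: "C * (X * N) = X * N"
  proof -
    have "C * (X * N) = X * (P * (Xi * (P * (X * N))))" using d by (simp add: C_def assoc')
    also have "\<dots> = X * (P * (Xi * (X * N)))" using d by (simp add: t2T)
    also have "\<dots> = X * N" using d by (simp add: XiXT PN)
    finally show ?thesis .
  qed
  have RR: "X * (1\<^sub>m m - N * Nd) * Xi * ((1\<^sub>m m - N * Nd) - 1\<^sub>m m) = R" by (simp add: R_def P_def)
  have Bform: "Nd * Xi * N * Nd * Zi * (1\<^sub>m m + mat_adjoint R) = Nd * (Xi * (Zi * Cs))"
  proof -
    have "Nd * Xi * N * Nd * Zi * (1\<^sub>m m + mat_adjoint R) = Nd * (Xi * (N * (Nd * (Zi * (1\<^sub>m m + mat_adjoint R)))))"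
      using d by (simp add: assoc')
    also have "\<dots> = Nd * (Xi * (P * (Zi * (1\<^sub>m m + mat_adjoint R))))" using d by (simp add: NNdT)
    also have "\<dots> = Nd * (Xi * (Zi * (P * (1\<^sub>m m + mat_adjoint R))))" using d by (simp add: PZiT)
    also have "P * (1\<^sub>m m + mat_adjoint R) = Cs" using d by (simp add: distl' PRadj Cs_def Cadj)
    finally show ?thesis .
  qed
  have ABT: "X * (N * (Nd * (Xi * (Zi * (Cs * T))))) = C * (Zi * (Cs * T))" if "dim_row T = m" for T
  proof -
    have "X * (N * (Nd * (Xi * (Zi * (Cs * T))))) = X * (P * (Xi * (Zi * (Cs * T))))" using that d by (simp add: NNdT)
    also have "\<dots> = X * (P * (Xi * (P * (Zi * (Cs * T)))))" using that d ZiCsT[OF that] by simp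
    also have "\<dots> = C * (Zi * (Cs * T))" using that d by (simp add: C_def assoc')
    finally show ?thesis .
  qed
  have AB: "X * (N * (Nd * (Xi * (Zi * Cs)))) = C * (Zi * Cs)"
    using ABT[of "1\<^sub>m m"] d by simp
  show ?thesis unfolding RR Z_def[symmetric] minvZ Bform penrose_def
  proof (intro conjI)
    show "Nd * (Xi * (Zi * Cs)) \<in> carrier_mat (dim_col (X * N)) (dim_row (X * N))"
      by (rule carrier_matI, simp_all add: d)
    have "X * N * (Nd * (Xi * (Zi * Cs))) * (X * N) = C * (Zi * (Cs * (X * N)))"
      using d by (simp add: assoc' ABT)
    also have "\<dots> = C * (Zi * (Cs * (C * (X * N))))" using CXN by simp
    also have "\<dots> = C * (P * (X * N))" using d by (simp add: CCT ZiKT)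
    also have "\<dots> = X * N" using d by (simp add: CPT CXN)
    finally show "X * N * (Nd * (Xi * (Zi * Cs))) * (X * N) = X * N" .
    have BA: "Nd * (Xi * (Zi * Cs)) * (X * N) = Nd * N"
    proof -
      have "Nd * (Xi * (Zi * Cs)) * (X * N) = Nd * (Xi * (Zi * (Cs * (C * (X * N)))))"
        using d by (simp add: assoc' CXN)
      also have "\<dots> = Nd * (Xi * (P * (X * N)))" using d by (simp add: CCT ZiKT)
      also have "\<dots> = Nd * (P * (Xi * (P * (X * N))))" using d by (simp add: NdPT)
      also have "\<dots> = Nd * (P * (Xi * (X * N)))" using d by (simp add: t2T)
      also have "\<dots> = Nd * N" using d by (simp add: XiXT PN)
      finally show ?thesis .
    qed
    show "Nd * (Xi * (Zi * Cs)) * (X * N) * (Nd * (Xi * (Zi * Cs))) = Nd * (Xi * (Zi * Cs))"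
      unfolding BA using d by (simp add: N2T assoc')
    show "mat_adjoint (Nd * (Xi * (Zi * Cs)) * (X * N)) = Nd * (Xi * (Zi * Cs)) * (X * N)"
      unfolding BA by (rule N4)
    have ABe: "X * N * (Nd * (Xi * (Zi * Cs))) = C * (Zi * Cs)" using AB d by (simp add: assoc')
    have "mat_adjoint (C * (Zi * Cs)) = C * (Zi * Cs)"
      using d by (simp add: adj_mult Cs_def Ziadj assoc')
    thus "mat_adjoint (X * N * (Nd * (Xi * (Zi * Cs)))) = X * N * (Nd * (Xi * (Zi * Cs)))"
      unfolding ABe .
  qed
qed



lemma S_inv:
  fixes S :: "complex mat"
  assumes S: "S \<in> carrier_mat r r" "diagonal_mat S" "\<forall>i<r. Im (S $$ (i,i)) = 0 \<and> Re (S $$ (i,i)) > 0"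
  shows "\<exists>Si. Si \<in> carrier_mat r r \<and> S * Si = 1\<^sub>m r \<and> Si * S = 1\<^sub>m r"
proof -
  have ut: "upper_triangular S" using S(1,2) unfolding upper_triangular_def diagonal_mat_def by auto
  have "det S = prod_list (diag_mat S)" by (rule det_upper_triangular[OF ut S(1)])
  also have "\<dots> \<noteq> 0"
  proof
    assume "prod_list (diag_mat S) = 0"
    hence "0 \<in> set (diag_mat S)" by (simp add: prod_list_zero_iff)
    then obtain i where i: "i < r" "S $$ (i,i) = 0" using S(1) unfolding diag_mat_def by auto
    thus False using S(3) by force
  qed
  finally have "det S \<noteq> 0" .
  from det_non_zero_imp_unit[OF S(1) this, of "()"]
  obtain B where "B \<in> carrier_mat r r" "B * S = 1\<^sub>m r" "S * B = 1\<^sub>m r"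
    unfolding Units_def ring_mat_def by auto
  thus ?thesis by blast
qed

lemma four_block_eq:
  fixes A B C D A' B' C' D' :: "complex mat"
  assumes c: "A \<in> carrier_mat n1 k1" "B \<in> carrier_mat n1 k2" "C \<in> carrier_mat n2 k1" "D \<in> carrier_mat n2 k2"
    "A' \<in> carrier_mat n1 k1" "B' \<in> carrier_mat n1 k2" "C' \<in> carrier_mat n2 k1" "D' \<in> carrier_mat n2 k2"
    and eq: "four_block_mat A B C D = four_block_mat A' B' C' D'"
  shows "A = A' \<and> B = B' \<and> C = C' \<and> D = D'"
proof -
  note dd = carrier_matD[OF c(1)] carrier_matD[OF c(2)] carrier_matD[OF c(3)] carrier_matD[OF c(4)]
    carrier_matD[OF c(5)] carrier_matD[OF c(6)] carrier_matD[OF c(7)] carrier_matD[OF c(8)]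
  have e: "four_block_mat A B C D $$ (i,j) = four_block_mat A' B' C' D' $$ (i,j)" for i j using eq by simp
  have "A = A'"
  proof (rule eq_matI)
    fix i j assume "i < dim_row A'" "j < dim_col A'"
    thus "A $$ (i,j) = A' $$ (i,j)" using e[of i j] dd by simp
  qed (use dd in auto)
  moreover have "B = B'"
  proof (rule eq_matI)
    fix i j assume "i < dim_row B'" "j < dim_col B'"
    thus "B $$ (i,j) = B' $$ (i,j)" using e[of i "j + k1"] dd by simp
  qed (use dd in auto)
  moreover have "C = C'"
  proof (rule eq_matI)
    fix i j assume "i < dim_row C'" "j < dim_col C'"
    thus "C $$ (i,j) = C' $$ (i,j)" using e[of "i + n1" j] dd by simp
  qed (use dd in auto)
  moreover have "D = D'"
  proof (rule eq_matI)
    fix i j assume "i < dim_row D'" "j < dim_col D'"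
    thus "D $$ (i,j) = D' $$ (i,j)" using e[of "i + n1" "j + k1"] dd by simp
  qed (use dd in auto)
  ultimately show ?thesis by simp
qed

lemma Jleft:
  fixes A B C D :: "complex mat"
  assumes c: "A \<in> carrier_mat n1 k1" "B \<in> carrier_mat n1 k2" "C \<in> carrier_mat n2 k1" "D \<in> carrier_mat n2 k2"
  shows "four_block_mat (1\<^sub>m n1) (0\<^sub>m n1 n2) (0\<^sub>m n2 n1) (0\<^sub>m n2 n2) * four_block_mat A B C D
    = four_block_mat A B (0\<^sub>m n2 k1) (0\<^sub>m n2 k2)"
  by (subst mult_four_block_mat[OF _ _ _ _ c], auto simp: c zl' zr' carrier_matD[OF c(1)] carrier_matD[OF c(2)] carrier_matD[OF c(3)] carrier_matD[OF c(4)])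

lemma Jright:
  fixes A B C D :: "complex mat"
  assumes c: "A \<in> carrier_mat n1 k1" "B \<in> carrier_mat n1 k2" "C \<in> carrier_mat n2 k1" "D \<in> carrier_mat n2 k2"
  shows "four_block_mat A B C D * four_block_mat (1\<^sub>m k1) (0\<^sub>m k1 k2) (0\<^sub>m k2 k1) (0\<^sub>m k2 k2)
    = four_block_mat A (0\<^sub>m n1 k2) C (0\<^sub>m n2 k2)"
  by (subst mult_four_block_mat[OF c], auto simp: c zl' zr' carrier_matD[OF c(1)] carrier_matD[OF c(2)] carrier_matD[OF c(3)] carrier_matD[OF c(4)])



lemma conjmult:
  fixes U M M' :: "complex mat"
  assumes U: "unitary_mat U m" and M: "M \<in> carrier_mat m m" and M': "M' \<in> carrier_mat m m"
  shows "(U * M * mat_adjoint U) * (U * M' * mat_adjoint U) = U * (M * M') * mat_adjoint U"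
proof -
  from U have Uc: "U \<in> carrier_mat m m" and U1: "mat_adjoint U * U = 1\<^sub>m m"
    by (auto simp: unitary_mat_def)
  note d = carrier_matD[OF Uc] carrier_matD[OF M] carrier_matD[OF M']
  have U1': "mat_adjoint U * (U * T) = T" if "dim_row T = m" for T
    using that by (simp add: assoc'[symmetric] d U1)
  show ?thesis using d by (simp add: assoc' U1')
qed

lemma TRI:
  fixes U X Xi X1 X2 X4 P :: "complex mat"
  assumes U: "unitary_mat U m" and rm: "r \<le> m"
    and X1: "X1 \<in> carrier_mat r r" and X2: "X2 \<in> carrier_mat (m - r) r" and X4: "X4 \<in> carrier_mat (m - r) (m - r)"
    and Xe: "X = U * four_block_mat X1 (0\<^sub>m r (m - r)) X2 X4 * mat_adjoint U"
    and Xi: "Xi \<in> carrier_mat m m" and XXi: "X * Xi = 1\<^sub>m m"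
    and Pe: "P = U * four_block_mat (1\<^sub>m r) (0\<^sub>m r (m - r)) (0\<^sub>m (m - r) r) (0\<^sub>m (m - r) (m - r)) * mat_adjoint U"
  shows "P * X * P = P * X \<and> P * Xi * P = P * Xi"
proof -
  define k where "k = m - r"
  have mk: "m = r + k" using rm by (simp add: k_def)
  from U have Uc: "U \<in> carrier_mat m m" and U1: "mat_adjoint U * U = 1\<^sub>m m" and U2: "U * mat_adjoint U = 1\<^sub>m m"
    by (auto simp: unitary_mat_def)
  define X' where "X' = four_block_mat X1 (0\<^sub>m r k) X2 X4"
  define J :: "complex mat" where "J = four_block_mat (1\<^sub>m r) (0\<^sub>m r k) (0\<^sub>m k r) (0\<^sub>m k k)"
  have X'c: "X' \<in> carrier_mat m m" unfolding X'_def mk using X1 X2 X4 by (simp add: k_def)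
  have Jc: "J \<in> carrier_mat m m" unfolding J_def mk by simp
  define Xi' where "Xi' = mat_adjoint U * Xi * U"
  have Xi'c: "Xi' \<in> carrier_mat m m" using Uc Xi unfolding Xi'_def by (metis adj_carrier mult_carrier_mat)
  note d = carrier_matD[OF Uc] carrier_matD[OF X'c] carrier_matD[OF Jc] carrier_matD[OF Xi'c] carrier_matD[OF Xi]
  have U1': "mat_adjoint U * (U * T) = T" if "dim_row T = m" for T
    using that by (simp add: assoc'[symmetric] d U1)
  have U2': "U * (mat_adjoint U * T) = T" if "dim_row T = m" for T
    using that by (simp add: assoc'[symmetric] d U2)
  have Xe': "X = U * X' * mat_adjoint U" unfolding Xe X'_def k_def ..
  have Xie: "Xi = U * Xi' * mat_adjoint U" unfolding Xi'_def using d by (simp add: assoc' U2' U2)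
  have XXi': "X' * Xi' = 1\<^sub>m m"
  proof -
    have "X * Xi = U * (X' * Xi') * mat_adjoint U" unfolding Xe' Xie by (rule conjmult[OF U X'c Xi'c])
    hence "U * (X' * Xi') * mat_adjoint U = 1\<^sub>m m" using XXi by simp
    hence "mat_adjoint U * (U * (X' * Xi') * mat_adjoint U) * U = mat_adjoint U * 1\<^sub>m m * U" by simp
    thus ?thesis using d by (simp add: assoc' U1' U1)
  qed
  obtain A1 A2 A3 A4 where sb: "split_block Xi' r r = (A1, A2, A3, A4)" by (cases "split_block Xi' r r") auto
  have dXi': "dim_row Xi' = r + k" "dim_col Xi' = r + k" using d mk by auto
  note sp = split_block[OF sb dXi']
  have "X' * Xi' = four_block_mat (X1 * A1 + 0\<^sub>m r k * A3) (X1 * A2 + 0\<^sub>m r k * A4) (X2 * A1 + X4 * A3) (X2 * A2 + X4 * A4)"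
    unfolding X'_def by (subst sp(5), rule mult_four_block_mat, use X1 X2 X4 sp in \<open>auto simp: k_def\<close>)
  also have "X1 * A1 + 0\<^sub>m r k * A3 = X1 * A1" using sp X1 by (simp add: zr' carrier_matD)
  also have "X1 * A2 + 0\<^sub>m r k * A4 = X1 * A2" using sp X1 by (simp add: zr' carrier_matD)
  finally have "four_block_mat (X1 * A1) (X1 * A2) (X2 * A1 + X4 * A3) (X2 * A2 + X4 * A4) = four_block_mat (1\<^sub>m r) (0\<^sub>m r k) (0\<^sub>m k r) (1\<^sub>m k)"
    using XXi' mk by simp
  moreover have "X1 * A1 \<in> carrier_mat r r" "X1 * A2 \<in> carrier_mat r k"
    "X2 * A1 + X4 * A3 \<in> carrier_mat k r" "X2 * A2 + X4 * A4 \<in> carrier_mat k k"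
    using X1 X2 X4 sp by (auto intro!: mult_carrier_mat add_carrier_mat simp: k_def)
  ultimately have e: "X1 * A1 = 1\<^sub>m r \<and> X1 * A2 = 0\<^sub>m r k"
    using four_block_eq[of "X1 * A1" r r "X1 * A2" k "X2 * A1 + X4 * A3" k "X2 * A2 + X4 * A4"
      "1\<^sub>m r" "0\<^sub>m r k" "0\<^sub>m k r" "1\<^sub>m k"] by auto
  hence e1: "X1 * A1 = 1\<^sub>m r" and e2: "X1 * A2 = 0\<^sub>m r k" by auto
  have "A1 * X1 = 1\<^sub>m r" by (rule mat_mult_left_right_inverse[OF X1 sp(1) e1])
  hence A2: "A2 = 0\<^sub>m r k"
  proof -
    assume a: "A1 * X1 = 1\<^sub>m r"
    have "A2 = (A1 * X1) * A2" using a sp by simp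
    also have "\<dots> = A1 * (X1 * A2)" using sp X1 by simp
    also have "\<dots> = 0\<^sub>m r k" using e2 sp by simp
    finally show ?thesis .
  qed
  have a: "J * X' = four_block_mat X1 (0\<^sub>m r k) (0\<^sub>m k r) (0\<^sub>m k k)" unfolding J_def X'_def
    by (rule Jleft) (use X1 X2 X4 in \<open>auto simp: k_def\<close>)
  have b: "four_block_mat X1 (0\<^sub>m r k) (0\<^sub>m k r) (0\<^sub>m k k) * J = four_block_mat X1 (0\<^sub>m r k) (0\<^sub>m k r) (0\<^sub>m k k)"
    unfolding J_def by (rule Jright) (use X1 in auto)
  have JX': "J * X' * J = J * X'" using a b by simp
  have a2: "J * Xi' = four_block_mat A1 A2 (0\<^sub>m k r) (0\<^sub>m k k)" unfolding J_def
    by (subst sp(5), rule Jleft) (use sp in \<open>auto simp: k_def\<close>)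
  have b2: "four_block_mat A1 A2 (0\<^sub>m k r) (0\<^sub>m k k) * J = four_block_mat A1 (0\<^sub>m r k) (0\<^sub>m k r) (0\<^sub>m k k)"
    unfolding J_def by (rule Jright) (use sp in \<open>auto simp: k_def\<close>)
  have JXi': "J * Xi' * J = J * Xi'" using a2 b2 A2 by simp
  have JXc: "J * X' \<in> carrier_mat m m" "J * Xi' \<in> carrier_mat m m" using Jc X'c Xi'c by auto
  have Pe': "P = U * J * mat_adjoint U" unfolding Pe J_def k_def ..
  have "P * X * P = U * (J * X' * J) * mat_adjoint U" unfolding Pe' Xe'
    by (simp add: conjmult[OF U] Jc X'c JXc)
  moreover have "P * X = U * (J * X') * mat_adjoint U" unfolding Pe' Xe'
    by (simp add: conjmult[OF U] Jc X'c JXc)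
  moreover have "P * Xi * P = U * (J * Xi' * J) * mat_adjoint U" unfolding Pe' Xie
    by (simp add: conjmult[OF U] Jc Xi'c JXc)
  moreover have "P * Xi = U * (J * Xi') * mat_adjoint U" unfolding Pe' Xie
    by (simp add: conjmult[OF U] Jc Xi'c JXc)
  ultimately show ?thesis using JX' JXi' by simp
qed



lemma herm_inv:
  fixes Z Zi :: "complex mat"
  assumes Zc: "Z \<in> carrier_mat m m" and Zi: "Zi \<in> carrier_mat m m" and ZZi: "Z * Zi = 1\<^sub>m m"
    and Zadj: "mat_adjoint Z = Z"
  shows "mat_adjoint Zi = Zi"
proof -
  note d = carrier_matD[OF Zc] carrier_matD[OF Zi]
  have ZiZ: "Zi * Z = 1\<^sub>m m" by (rule mat_mult_left_right_inverse[OF Zc Zi ZZi])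
  have "mat_adjoint (Z * Zi) = mat_adjoint Zi * Z" using d by (simp add: adj_mult Zadj)
  hence a: "mat_adjoint Zi * Z = 1\<^sub>m m" using ZZi by simp
  have "mat_adjoint Zi = mat_adjoint Zi * (Z * Zi)" using ZZi d by simp
  also have "\<dots> = (mat_adjoint Zi * Z) * Zi" using d by (simp add: assoc')
  finally show ?thesis using a d by simp
qed

theorem theorem3p1:
  fixes N U V S X Y :: "complex mat" and m n r :: nat
  assumes N: "N \<in> carrier_mat m n"
    and rk: "mat_rank N = r"
    and rm: "r \<le> m" and rn: "r \<le> n"
    and U: "unitary_mat U m" and V: "unitary_mat V n"
    and S: "S \<in> carrier_mat r r" "diagonal_mat S"
       "\<forall>i<r. Im (S $$ (i,i)) = 0 \<and> Re (S $$ (i,i)) > 0"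
    and svd: "N = U * four_block_mat S (0\<^sub>m r (n - r)) (0\<^sub>m (m - r) r) (0\<^sub>m (m - r) (n - r)) * mat_adjoint V"
    and X: "X \<in> carrier_mat m m" "invertible_mat X"
    and Y: "Y \<in> carrier_mat n n" "invertible_mat Y"
  shows
    "((\<exists>X1 X2 X4. X1 \<in> carrier_mat r r \<and> X2 \<in> carrier_mat (m - r) r \<and>
         X4 \<in> carrier_mat (m - r) (m - r) \<and>
         X = U * four_block_mat X1 (0\<^sub>m r (m - r)) X2 X4 * mat_adjoint U) \<longrightarrow>
      (let R = X * E_proj N * minv X * (E_proj N - 1\<^sub>m m) in
       mp_pinv (X * N) =
         mp_pinv N * minv X * N * mp_pinv N * minv (1\<^sub>m m + mat_adjoint R * R) * (1\<^sub>m m + mat_adjoint R)))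
   \<and> ((\<exists>Y1 Y3 Y4. Y1 \<in> carrier_mat r r \<and> Y3 \<in> carrier_mat r (n - r) \<and>
         Y4 \<in> carrier_mat (n - r) (n - r) \<and>
         Y = V * four_block_mat Y1 Y3 (0\<^sub>m (n - r) r) Y4 * mat_adjoint V) \<longrightarrow>
      (let L = (F_proj N - 1\<^sub>m n) * minv Y * F_proj N * Y in
       mp_pinv (N * Y) =
         (1\<^sub>m n + mat_adjoint L) * minv (1\<^sub>m n + L * mat_adjoint L) * mp_pinv N * N * minv Y * mp_pinv N))"
proof -
  define k1 where "k1 = m - r"
  define k2 where "k2 = n - r"
  have mk: "m = r + k1" using rm by (simp add: k1_def)
  have nk: "n = r + k2" using rn by (simp add: k2_def)
  obtain Si where Si: "Si \<in> carrier_mat r r" and SSi: "S * Si = 1\<^sub>m r" and SiS: "Si * S = 1\<^sub>m r"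
    using S_inv[OF S] by auto
  from U have Uc: "U \<in> carrier_mat m m" and U1: "mat_adjoint U * U = 1\<^sub>m m" and U2: "U * mat_adjoint U = 1\<^sub>m m"
    by (auto simp: unitary_mat_def)
  from V have Vc: "V \<in> carrier_mat n n" and V1: "mat_adjoint V * V = 1\<^sub>m n" and V2: "V * mat_adjoint V = 1\<^sub>m n"
    by (auto simp: unitary_mat_def)
  define D :: "complex mat" where "D = four_block_mat S (0\<^sub>m r k2) (0\<^sub>m k1 r) (0\<^sub>m k1 k2)"
  define D' :: "complex mat" where "D' = four_block_mat Si (0\<^sub>m r k1) (0\<^sub>m k2 r) (0\<^sub>m k2 k1)"
  define Jm :: "complex mat" where "Jm = four_block_mat (1\<^sub>m r) (0\<^sub>m r k1) (0\<^sub>m k1 r) (0\<^sub>m k1 k1)"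
  define Jn :: "complex mat" where "Jn = four_block_mat (1\<^sub>m r) (0\<^sub>m r k2) (0\<^sub>m k2 r) (0\<^sub>m k2 k2)"
  have Dc: "D \<in> carrier_mat m n" unfolding D_def mk nk using S by simp
  have D'c: "D' \<in> carrier_mat n m" unfolding D'_def mk nk using Si by simp
  have Jmc: "Jm \<in> carrier_mat m m" unfolding Jm_def mk by simp
  have Jnc: "Jn \<in> carrier_mat n n" unfolding Jn_def nk by simp
  note d = carrier_matD[OF N] carrier_matD[OF Uc] carrier_matD[OF Vc] carrier_matD[OF Dc] carrier_matD[OF D'c]
    carrier_matD[OF Jmc] carrier_matD[OF Jnc]
  have DD': "D * D' = Jm" unfolding D_def D'_def Jm_def
    by (subst mult_four_block_mat[OF S(1) zero_carrier_mat zero_carrier_mat zero_carrier_mat Si zero_carrier_mat zero_carrier_mat zero_carrier_mat], use S Si in \<open>auto simp: SSi zl' zr' carrier_matD\<close>)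
  have D'D: "D' * D = Jn" unfolding D_def D'_def Jn_def
    by (subst mult_four_block_mat[OF Si zero_carrier_mat zero_carrier_mat zero_carrier_mat S(1) zero_carrier_mat zero_carrier_mat zero_carrier_mat], use S Si in \<open>auto simp: SiS zl' zr' carrier_matD\<close>)
  have JmD: "Jm * D = D" unfolding Jm_def D_def by (rule Jleft) (use S in auto)
  have JnD': "Jn * D' = D'" unfolding Jn_def D'_def by (rule Jleft) (use Si in auto)
  have Jmadj: "mat_adjoint Jm = Jm" unfolding Jm_def by (subst adj_four_block[of _ r r _ k1 _ k1], auto)
  have Jnadj: "mat_adjoint Jn = Jn" unfolding Jn_def by (subst adj_four_block[of _ r r _ k2 _ k2], auto)
  have pD: "penrose D D'" unfolding penrose_def
    using D'c Dc DD' D'D JmD JnD' Jmadj Jnadj by simp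
  have svd': "N = U * D * mat_adjoint V" unfolding svd D_def k1_def k2_def ..
  define Nd where "Nd = V * D' * mat_adjoint U"
  have pN: "penrose N Nd" unfolding svd' Nd_def by (rule penrose_unitary[OF Dc pD U V])
  have mpN: "mp_pinv N = Nd" by (rule mp_pinv_eq[OF N pN])
  from pN have Nd: "Nd \<in> carrier_mat n m" and N3: "mat_adjoint (N * Nd) = N * Nd" and N4: "mat_adjoint (Nd * N) = Nd * N"
    using N by (auto simp: penrose_def)
  note d = d carrier_matD[OF Nd]
  have U1': "mat_adjoint U * (U * T) = T" if "dim_row T = m" for T
    using that by (simp add: assoc'[symmetric] d U1)
  have V1': "mat_adjoint V * (V * T) = T" if "dim_row T = n" for T
    using that by (simp add: assoc'[symmetric] d V1)
  have NNd: "N * Nd = U * Jm * mat_adjoint U" unfolding svd' Nd_def DD'[symmetric]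
    using d by (simp add: assoc' V1')
  have NdN: "Nd * N = V * Jn * mat_adjoint V" unfolding svd' Nd_def D'D[symmetric]
    using d by (simp add: assoc' U1')
  show ?thesis
  proof (intro conjI impI)
    assume "\<exists>X1 X2 X4. X1 \<in> carrier_mat r r \<and> X2 \<in> carrier_mat (m - r) r \<and>
         X4 \<in> carrier_mat (m - r) (m - r) \<and> X = U * four_block_mat X1 (0\<^sub>m r (m - r)) X2 X4 * mat_adjoint U"
    then obtain X1 X2 X4 where X1: "X1 \<in> carrier_mat r r" and X2: "X2 \<in> carrier_mat (m - r) r"
      and X4: "X4 \<in> carrier_mat (m - r) (m - r)" and Xe: "X = U * four_block_mat X1 (0\<^sub>m r (m - r)) X2 X4 * mat_adjoint U"
      by auto
    define Xi where "Xi = minv X"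
    have Xi: "Xi \<in> carrier_mat m m" and XXi: "X * Xi = 1\<^sub>m m" and XiX: "Xi * X = 1\<^sub>m m"
      using invertible_minv[OF X] by (auto simp: Xi_def)
    have tri: "N * Nd * X * (N * Nd) = N * Nd * X \<and> N * Nd * Xi * (N * Nd) = N * Nd * Xi"
      by (rule TRI[OF U rm X1 X2 X4 Xe Xi XXi], unfold NNd Jm_def k1_def, rule refl)
    have pc: "penrose (X * N) (Nd * Xi * N * Nd *
     minv (1\<^sub>m m + mat_adjoint (X * (1\<^sub>m m - N * Nd) * Xi * ((1\<^sub>m m - N * Nd) - 1\<^sub>m m)) *
                       (X * (1\<^sub>m m - N * Nd) * Xi * ((1\<^sub>m m - N * Nd) - 1\<^sub>m m))) *
     (1\<^sub>m m + mat_adjoint (X * (1\<^sub>m m - N * Nd) * Xi * ((1\<^sub>m m - N * Nd) - 1\<^sub>m m))))"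
      using core1[OF N pN X(1) Xi XXi XiX] tri by simp
    have XN: "X * N \<in> carrier_mat m n" using X N by simp
    show "let R = X * E_proj N * minv X * (E_proj N - 1\<^sub>m m) in
       mp_pinv (X * N) =
         mp_pinv N * minv X * N * mp_pinv N * minv (1\<^sub>m m + mat_adjoint R * R) * (1\<^sub>m m + mat_adjoint R)"
      unfolding Let_def E_proj_def mpN Xi_def[symmetric] using mp_pinv_eq[OF XN pc] d by simp
  next
    assume "\<exists>Y1 Y3 Y4. Y1 \<in> carrier_mat r r \<and> Y3 \<in> carrier_mat r (n - r) \<and>
         Y4 \<in> carrier_mat (n - r) (n - r) \<and> Y = V * four_block_mat Y1 Y3 (0\<^sub>m (n - r) r) Y4 * mat_adjoint V"
    then obtain Y1 Y3 Y4 where Y1: "Y1 \<in> carrier_mat r r" and Y3: "Y3 \<in> carrier_mat r (n - r)"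
      and Y4: "Y4 \<in> carrier_mat (n - r) (n - r)" and Ye: "Y = V * four_block_mat Y1 Y3 (0\<^sub>m (n - r) r) Y4 * mat_adjoint V"
      by auto
    define Yi where "Yi = minv Y"
    have Yi: "Yi \<in> carrier_mat n n" and YYi: "Y * Yi = 1\<^sub>m n" and YiY: "Yi * Y = 1\<^sub>m n"
      using invertible_minv[OF Y] by (auto simp: Yi_def)
    note d = d carrier_matD[OF Y(1)] carrier_matD[OF Yi]
    have aYe: "mat_adjoint Y = V * four_block_mat (mat_adjoint Y1) (0\<^sub>m r (n - r)) (mat_adjoint Y3) (mat_adjoint Y4) * mat_adjoint V"
    proof -
      have Fc: "four_block_mat Y1 Y3 (0\<^sub>m (n - r) r) Y4 \<in> carrier_mat n n" using four_block_carrier_mat[OF Y1 Y4, of Y3 "0\<^sub>m (n - r) r"] rn by simp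
      have "mat_adjoint Y = V * mat_adjoint (four_block_mat Y1 Y3 (0\<^sub>m (n - r) r) Y4) * mat_adjoint V"
        unfolding Ye using d carrier_matD[OF Fc] by (simp add: adj_mult assoc')
      also have "mat_adjoint (four_block_mat Y1 Y3 (0\<^sub>m (n - r) r) Y4) = four_block_mat (mat_adjoint Y1) (0\<^sub>m r (n - r)) (mat_adjoint Y3) (mat_adjoint Y4)"
        using Y1 Y3 Y4 by (subst adj_four_block[of _ r r _ "n - r" _ "n - r"], auto)
      finally show ?thesis .
    qed
    have aYc: "mat_adjoint Y \<in> carrier_mat n n" "mat_adjoint Yi \<in> carrier_mat n n" using Y(1) Yi by auto
    have aYYi: "mat_adjoint Y * mat_adjoint Yi = 1\<^sub>m n" using YiY d by (simp add: adj_mult[symmetric])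
    have aYiY: "mat_adjoint Yi * mat_adjoint Y = 1\<^sub>m n" using YYi d by (simp add: adj_mult[symmetric])
    have aN: "mat_adjoint N \<in> carrier_mat n m" using N by simp
    have paN: "penrose (mat_adjoint N) (mat_adjoint Nd)" by (rule penrose_adj[OF N pN])
    have aNNd: "mat_adjoint N * mat_adjoint Nd = Nd * N" using N4 d by (simp add: adj_mult[symmetric])
    have tri: "Nd * N * mat_adjoint Y * (Nd * N) = Nd * N * mat_adjoint Y \<and> Nd * N * mat_adjoint Yi * (Nd * N) = Nd * N * mat_adjoint Yi"
      by (rule TRI[OF V rn _ _ _ aYe aYc(2) aYYi], use Y1 Y3 Y4 in auto, unfold NdN Jn_def k2_def, rule refl)
    define Q where "Q = Nd * N"
    define F where "F = 1\<^sub>m n - Q"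
    define L where "L = (F - 1\<^sub>m n) * Yi * F * Y"
    have Qc: "Q \<in> carrier_mat n n" using Nd N by (simp add: Q_def)
    have Fc: "F \<in> carrier_mat n n" using Qc unfolding F_def by (rule minus_carrier_mat)
    have Lc: "L \<in> carrier_mat n n" using Fc Yi Y(1) unfolding L_def by (metis minus_carrier_mat one_carrier_mat mult_carrier_mat)
    note d = d carrier_matD[OF Qc] carrier_matD[OF Fc] carrier_matD[OF Lc]
    have Fadj: "mat_adjoint F = F" unfolding F_def Q_def using d N4 by (simp add: adj_minus)
    have F1adj: "mat_adjoint (F - 1\<^sub>m n) = F - 1\<^sub>m n" using d Fadj by (simp add: adj_minus)
    have Ladj: "mat_adjoint L = mat_adjoint Y * F * mat_adjoint Yi * (F - 1\<^sub>m n)"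
      unfolding L_def using d by (simp add: adj_mult Fadj F1adj assoc')
    have pc: "penrose (mat_adjoint Y * mat_adjoint N) (mat_adjoint Nd * mat_adjoint Yi * mat_adjoint N * mat_adjoint Nd *
     minv (1\<^sub>m n + mat_adjoint (mat_adjoint Y * (1\<^sub>m n - mat_adjoint N * mat_adjoint Nd) * mat_adjoint Yi * ((1\<^sub>m n - mat_adjoint N * mat_adjoint Nd) - 1\<^sub>m n)) *
                       (mat_adjoint Y * (1\<^sub>m n - mat_adjoint N * mat_adjoint Nd) * mat_adjoint Yi * ((1\<^sub>m n - mat_adjoint N * mat_adjoint Nd) - 1\<^sub>m n))) *
     (1\<^sub>m n + mat_adjoint (mat_adjoint Y * (1\<^sub>m n - mat_adjoint N * mat_adjoint Nd) * mat_adjoint Yi * ((1\<^sub>m n - mat_adjoint N * mat_adjoint Nd) - 1\<^sub>m n))))"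
      by (rule core1[OF aN paN aYc aYYi aYiY], unfold aNNd, use tri in auto)
    define B' where "B' = mat_adjoint Nd * mat_adjoint Yi * mat_adjoint N * mat_adjoint Nd *
       minv (1\<^sub>m n + L * mat_adjoint L) * (1\<^sub>m n + L)"
    have pc': "penrose (mat_adjoint Y * mat_adjoint N) B'"
      using pc unfolding aNNd Q_def[symmetric] F_def[symmetric] Ladj[symmetric] B'_def by simp
    have NYc: "mat_adjoint Y * mat_adjoint N \<in> carrier_mat n m" using aYc aN by simp
    have pNY: "penrose (N * Y) (mat_adjoint B')"
      using penrose_adj[OF NYc pc'] d by (simp add: adj_mult[symmetric])
    have NY: "N * Y \<in> carrier_mat m n" using N Y(1) by simp
    have mpNY: "mp_pinv (N * Y) = mat_adjoint B'" by (rule mp_pinv_eq[OF NY pNY])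
    have aLc: "mat_adjoint L \<in> carrier_mat n n" using Lc by simp
    obtain Zi where Zi: "Zi \<in> carrier_mat n n" and ZZi: "(1\<^sub>m n + L * mat_adjoint L) * Zi = 1\<^sub>m n"
      using Z_invertible[OF aLc] by auto
    have Mc: "1\<^sub>m n + L * mat_adjoint L \<in> carrier_mat n n" using Lc by simp
    have minvM: "minv (1\<^sub>m n + L * mat_adjoint L) = Zi" by (rule minv_eq[OF Mc Zi ZZi])
    have Madj: "mat_adjoint (1\<^sub>m n + L * mat_adjoint L) = 1\<^sub>m n + L * mat_adjoint L"
      using d by (simp add: adj_add adj_mult)
    have Ziadj: "mat_adjoint Zi = Zi" by (rule herm_inv[OF Mc Zi ZZi Madj])
    note d = d carrier_matD[OF Zi]
    have "mat_adjoint B' = (1\<^sub>m n + mat_adjoint L) * Zi * Nd * N * Yi * Nd"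
      unfolding B'_def minvM using d by (simp add: adj_mult adj_add Ziadj assoc')
    thus "let L = (F_proj N - 1\<^sub>m n) * minv Y * F_proj N * Y in
       mp_pinv (N * Y) =
         (1\<^sub>m n + mat_adjoint L) * minv (1\<^sub>m n + L * mat_adjoint L) * mp_pinv N * N * minv Y * mp_pinv N"
      unfolding Let_def F_proj_def mpN Yi_def[symmetric] mpNY using d
      by (simp add: Q_def[symmetric] F_def[symmetric] L_def[symmetric] minvM)
  qed
qed

end
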